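(* Suppose $\mathcal G$ has a spanning tree and let $\beta>0$. Consider system (S) where each agent $i$ determines its triggering times by the following self-triggered procedure, given $t^i_1=0,\dots,t^i_k$: (1) At time $s=t^i_k$, agent $i$ predicts its own state as $x_i(t)=x_i(t^i_k)+(t-t^i_k)q_i(t^i_k)$ and the state of each in-neighbour $v_p$ as $x_p(t)=x_p(t^p_{k_p(s)})+(t-t^p_{k_p(s)})q_p(t^p_{k_p(s)})$ for $t\ge s$, substitutes these into $q_i(t)=-\sum_jL_{ij}x_j(t)$, and computes $$\tau^i_{k+1}=\max\Big\{\tau\ge s:\ |q_i(t^i_k)-q_i(t)|\le e^{-\beta t}\ \ \forall t\in[s,\tau]\Big\}.$$ (2) If some in-neighbour of $v_i$ triggers at a time $t_0\in(s,\tau^i_{k+1})$ (and sends its triggering time, state and control value to $v_i$), then set $s=t_0$ and return to step (1). (3) If no in-neighbour of $v_i$ triggers during $(s,\tau^i_{k+1})$, then $v_i$ triggers at $t^i_{k+1}=\tau^i_{k+1}$, updating its control value and sending $t^i_{k+1}$, $x_i(t^i_{k+1})$, $q_i(t^i_{k+1})$ to all its out-neighbours. Then system (S) reaches consensus exponentially and Zeno behaviour is excluded (each agent has only finitely many triggering times in any bounded interval).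
   Context: Let $\mathcal G$ be a weighted directed graph on agents $v_1,\dots,v_m$ with weighted adjacency matrix $\mathcal A=(a_{ij})$, $a_{ij}\ge0$, $a_{ii}=0$, where $a_{ij}>0$ iff there is a link from $v_j$ to $v_i$ ($v_j$ is an in-neighbour of $v_i$ and $v_i$ an out-neighbour of $v_j$). Let $D=\mathrm{diag}(\sum_j a_{1j},\dots,\sum_j a_{mj})$ and $L=D-\mathcal A$. $\mathcal G$ has a spanning tree if some agent has a directed path to every other agent. System (S): $\dot x_i(t)=-\sum_{j=1}^m L_{ij}x_j(t^i_{k_i(t)})$, $i=1,\dots,m$, where $0=t^i_1<t^i_2<\cdots$ are agent $i$'s triggering times and $k_i(t)=\max\{k:t^i_k\le t\}$; thus $\dot x_i(t)=q_i(t^i_{k_i(t)})$ with $q_i(t)=-\sum_jL_{ij}x_j(t)$. Exponential consensus means there exist $C,\varepsilon>0$ with $|x_i(t)-x_j(t)|\le Ce^{-\varepsilon t}$ for all $i,j$, $t\ge0$. *)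

theory Defs
  imports Complex_Main "HOL-Library.Extended_Real"
begin

text \<open>Agents are indexed by 0,...,m-1.  w i j is the weight a_ij (link from v_j to v_i).\<close>

definition edge :: "nat \<Rightarrow> (nat \<Rightarrow> nat \<Rightarrow> real) \<Rightarrow> nat \<Rightarrow> nat \<Rightarrow> bool" where
  "edge m w j i \<longleftrightarrow> j < m \<and> i < m \<and> w i j > 0"

definition has_spanning_tree :: "nat \<Rightarrow> (nat \<Rightarrow> nat \<Rightarrow> real) \<Rightarrow> bool" where
  "has_spanning_tree m w \<longleftrightarrow> (\<exists>r<m. \<forall>i<m. (edge m w)\<^sup>*\<^sup>* r i)"

definition lap :: "nat \<Rightarrow> (nat \<Rightarrow> nat \<Rightarrow> real) \<Rightarrow> nat \<Rightarrow> nat \<Rightarrow> real" where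
  "lap m w i j = (if i = j then (\<Sum>k<m. w i k) else 0) - w i j"

definition ctrl :: "nat \<Rightarrow> (nat \<Rightarrow> nat \<Rightarrow> real) \<Rightarrow> (nat \<Rightarrow> real \<Rightarrow> real) \<Rightarrow> nat \<Rightarrow> real \<Rightarrow> real" where
  "ctrl m w x i t = - (\<Sum>j<m. lap m w i j * x j t)"

text \<open>Triggering times of agent i: tt i k for enat k < K i (K i = \<infinity> means infinitely many);
  the paper's t^i_{k+1} is tt i k.\<close>
definition last_trig :: "(nat \<Rightarrow> enat) \<Rightarrow> (nat \<Rightarrow> nat \<Rightarrow> real) \<Rightarrow> nat \<Rightarrow> real \<Rightarrow> real" where
  "last_trig K tt j s = Sup {tt j k | k. enat k < K j \<and> tt j k \<le> s}"

definition system_S :: "nat \<Rightarrow> (nat \<Rightarrow> nat \<Rightarrow> real) \<Rightarrow> (nat \<Rightarrow> real \<Rightarrow> real)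
    \<Rightarrow> (nat \<Rightarrow> enat) \<Rightarrow> (nat \<Rightarrow> nat \<Rightarrow> real) \<Rightarrow> bool" where
  "system_S m w x K tt \<longleftrightarrow>
     (\<forall>i<m. continuous_on {0..} (x i) \<and>
        (\<forall>s\<ge>0. (x i has_real_derivative ctrl m w x i (last_trig K tt i s)) (at_right s)))"

definition next_trig :: "(nat \<Rightarrow> enat) \<Rightarrow> (nat \<Rightarrow> nat \<Rightarrow> real) \<Rightarrow> nat \<Rightarrow> nat \<Rightarrow> ereal" where
  "next_trig K tt i k = (if enat (Suc k) < K i then ereal (tt i (Suc k)) else \<infinity>)"

text \<open>Current restart point s of agent i (whose last trigger is tk) just before time u:
  the latest in-neighbour triggering time in (tk, u), or tk if there is none.\<close>
definition restart :: "nat \<Rightarrow> (nat \<Rightarrow> nat \<Rightarrow> real) \<Rightarrow> (nat \<Rightarrow> enat) \<Rightarrow> (nat \<Rightarrow> nat \<Rightarrow> real)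
    \<Rightarrow> nat \<Rightarrow> real \<Rightarrow> real \<Rightarrow> real" where
  "restart m w K tt i tk u =
     Sup ({tk} \<union> {tt p l | p l. p < m \<and> w i p > 0 \<and> enat l < K p \<and> tk < tt p l \<and> tt p l < u})"

definition qpred :: "nat \<Rightarrow> (nat \<Rightarrow> nat \<Rightarrow> real) \<Rightarrow> (nat \<Rightarrow> real \<Rightarrow> real) \<Rightarrow> (nat \<Rightarrow> enat)
    \<Rightarrow> (nat \<Rightarrow> nat \<Rightarrow> real) \<Rightarrow> nat \<Rightarrow> real \<Rightarrow> real \<Rightarrow> real \<Rightarrow> real" where
  "qpred m w x K tt i tk s u =
     - (lap m w i i * (x i tk + (u - tk) * ctrl m w x i tk)
        + (\<Sum>j\<in>{..<m} - {i}. lap m w i j *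
             (x j (last_trig K tt j s) + (u - last_trig K tt j s) * ctrl m w x j (last_trig K tt j s))))"

definition tau_pred :: "real \<Rightarrow> nat \<Rightarrow> (nat \<Rightarrow> nat \<Rightarrow> real) \<Rightarrow> (nat \<Rightarrow> real \<Rightarrow> real) \<Rightarrow> (nat \<Rightarrow> enat)
    \<Rightarrow> (nat \<Rightarrow> nat \<Rightarrow> real) \<Rightarrow> nat \<Rightarrow> real \<Rightarrow> real \<Rightarrow> ereal" where
  "tau_pred \<beta> m w x K tt i tk s =
     Sup {ereal \<tau> | \<tau>. s \<le> \<tau> \<and>
           (\<forall>u\<in>{s..\<tau>}. \<bar>ctrl m w x i tk - qpred m w x K tt i tk s u\<bar> \<le> exp (- \<beta> * u))}"

text \<open>The triggering times are generated by the self-triggered procedure (1)-(3):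
  between two consecutive triggers tk < t_{k+1} of agent i, at every time u the
  current prediction (made at the latest restart) has not yet expired (step 2), and
  t_{k+1} equals the tau computed at the last restart (step 3); if there is no next
  trigger, the prediction never expires.\<close>
definition self_triggered :: "real \<Rightarrow> nat \<Rightarrow> (nat \<Rightarrow> nat \<Rightarrow> real) \<Rightarrow> (nat \<Rightarrow> real \<Rightarrow> real)
    \<Rightarrow> (nat \<Rightarrow> enat) \<Rightarrow> (nat \<Rightarrow> nat \<Rightarrow> real) \<Rightarrow> bool" where
  "self_triggered \<beta> m w x K tt \<longleftrightarrow>
     (\<forall>i<m. tt i 0 = 0 \<and> enat 0 < K i \<and>
        (\<forall>k. enat (Suc k) < K i \<longrightarrow> tt i k < tt i (Suc k)) \<and>
        (\<forall>k. enat k < K i \<longrightarrow>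
           (\<forall>u. tt i k < u \<and> ereal u < next_trig K tt i k \<longrightarrow>
               ereal u < tau_pred \<beta> m w x K tt i (tt i k) (restart m w K tt i (tt i k) u)) \<and>
           (enat (Suc k) < K i \<longrightarrow>
               tau_pred \<beta> m w x K tt i (tt i k) (restart m w K tt i (tt i k) (tt i (Suc k)))
                 = ereal (tt i (Suc k)))))"

end

theory Submission
  imports Defs
begin



lemma barrier:
  fixes g :: "'i \<Rightarrow> real \<Rightarrow> real"
  assumes fin: "finite I" and cont: "\<And>i. i\<in>I \<Longrightarrow> continuous_on {a..b} (g i)"
    and start: "\<And>i. i\<in>I \<Longrightarrow> g i a \<le> 0"
    and step: "\<And>t i. t\<in>{a..<b} \<Longrightarrow> i\<in>I \<Longrightarrow> (\<forall>j\<in>I. g j t \<le> 0) \<Longrightarrow> g i t = 0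
        \<Longrightarrow> \<exists>d<0. (g i has_real_derivative d) (at_right t)"
    and t: "t\<in>{a..b}" and i: "i\<in>I"
  shows "g i t \<le> 0"
proof (rule ccontr)
  assume "\<not> g i t \<le> 0"
  define S where "S = {t\<in>{a..b}. \<exists>i\<in>I. g i t > 0}"
  have tS: "t \<in> S" using \<open>\<not> g i t \<le> 0\<close> t i by (force simp: S_def)
  have bdd: "bdd_below S" unfolding S_def by (rule bdd_belowI[of _ a]) auto
  define c where "c = Inf S"
  have ct: "c \<le> t" unfolding c_def using tS bdd by (rule cInf_lower)
  have ac: "a \<le> c" unfolding c_def using tS by (intro cInf_greatest) (auto simp: S_def)
  have below: "\<forall>j\<in>I. g j s \<le> 0" if "a \<le> s" "s < c" for s
  proof (rule ccontr)
    assume "\<not> (\<forall>j\<in>I. g j s \<le> 0)"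
    then have "s \<in> S" using that ct t by (force simp: S_def not_le)
    then have "c \<le> s" unfolding c_def using bdd by (rule cInf_lower)
    then show False using that by simp
  qed
  have atc: "\<forall>j\<in>I. g j c \<le> 0"
  proof
    fix j assume j: "j \<in> I"
    show "g j c \<le> 0"
    proof (cases "c = a")
      case True then show ?thesis using start j by simp
    next
      case False
      then have ac': "a < c" using ac by simp
      show ?thesis
      proof (rule ccontr)
        assume "\<not> g j c \<le> 0"
        have "(g j \<longlongrightarrow> g j c) (at c within {a..b})"
          using cont[OF j] ac ct t by (auto simp: continuous_on_def)
        then have "(g j \<longlongrightarrow> g j c) (at c within {a..c})"
          by (rule tendsto_within_subset) (use ct t in auto)
        then have "(g j \<longlongrightarrow> g j c) (at_left c)"
          using at_within_Icc_at_left[OF ac'] by simp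
        then have e1: "eventually (\<lambda>s. g j s > 0) (at_left c)"
          using \<open>\<not> g j c \<le> 0\<close> by (intro order_tendstoD) auto
        have e2: "eventually (\<lambda>s. s > a \<and> s < c) (at_left c)"
          using ac' by (auto simp: eventually_at_left_field intro!: exI[of _ a])
        have "eventually (\<lambda>s. g j s > 0 \<and> s > a \<and> s < c) (at_left c)"
          using e1 e2 by eventually_elim auto
        then obtain s where "g j s > 0" "s > a" "s < c"
          using eventually_happens' trivial_limit_at_left_real by blast
        then show False using below[of s] j by auto
      qed
    qed
  qed
  have cb: "c < b"
  proof (rule ccontr)
    assume "\<not> c < b"
    then have "c = t" using ct t by auto
    then show False using tS atc by (auto simp: S_def)
  qed
  have ev: "eventually (\<lambda>s. g j s \<le> 0) (at_right c)" if j: "j \<in> I" for j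
  proof (cases "g j c < 0")
    case True
    have "(g j \<longlongrightarrow> g j c) (at c within {a..b})"
      using cont[OF j] ac ct t by (auto simp: continuous_on_def)
    then have "(g j \<longlongrightarrow> g j c) (at c within {c..b})"
      by (rule tendsto_within_subset) (use ac in auto)
    then have "(g j \<longlongrightarrow> g j c) (at_right c)"
      using at_within_Icc_at_right[OF cb] by simp
    then have "eventually (\<lambda>s. g j s < 0) (at_right c)"
      using True by (intro order_tendstoD) auto
    then show ?thesis by (auto elim: eventually_mono)
  next
    case False
    then have "g j c = 0" using atc j by force
    then obtain d where d: "d < 0" "(g j has_real_derivative d) (at_right c)"
      using step[of c j] ac cb atc j by auto
    then have "((\<lambda>y. (g j y - g j c) / (y - c)) \<longlongrightarrow> d) (at_right c)"
      by (simp add: has_field_derivative_iff)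
    then have "eventually (\<lambda>y. (g j y - g j c) / (y - c) < 0) (at_right c)"
      using d by (intro order_tendstoD) auto
    moreover have "eventually (\<lambda>y. y > c) (at_right c)" by (rule eventually_at_right_less)
    ultimately show ?thesis
      by eventually_elim (use \<open>g j c = 0\<close> in \<open>auto simp: divide_less_0_iff\<close>)
  qed
  have "eventually (\<lambda>s. \<forall>j\<in>I. g j s \<le> 0) (at_right c)"
    using fin ev by (simp add: eventually_ball_finite)
  then obtain b' where b': "b' > c" "\<And>y. c < y \<Longrightarrow> y < b' \<Longrightarrow> \<forall>j\<in>I. g j y \<le> 0"
    by (auto simp: eventually_at_right_field)
  have "Inf S < b'" using b' c_def by simp
  then obtain s where s: "s \<in> S" "s < b'" using cInf_less_iff[OF _ bdd] tS by blast
  have "c \<le> s" unfolding c_def using s(1) bdd by (rule cInf_lower)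
  moreover have "s \<noteq> c" using s(1) atc by (auto simp: S_def)
  ultimately have "\<forall>j\<in>I. g j s \<le> 0" using b' s by auto
  then show False using s(1) by (auto simp: S_def)
qed




lemma cmp_upper:
  fixes f \<Phi> \<phi> :: "real \<Rightarrow> real"
  assumes ab: "a \<le> b" and cont: "continuous_on {a..b} f"
    and der: "\<And>t. t\<in>{a..<b} \<Longrightarrow> \<exists>d. d \<le> \<phi> t \<and> (f has_real_derivative d) (at_right t)"
    and P: "\<And>t. (\<Phi> has_real_derivative \<phi> t) (at t)"
    and t: "t\<in>{a..b}"
  shows "f t \<le> f a + (\<Phi> t - \<Phi> a)"
proof (rule field_le_epsilon)
  fix e :: real assume e: "e > 0"
  define \<epsilon> where "\<epsilon> = e / (b - a + 1)"
  have \<epsilon>: "\<epsilon> > 0" using e ab by (simp add: \<epsilon>_def)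
  have cP: "continuous_on {a..b} \<Phi>"
    using P by (meson DERIV_isCont continuous_at_imp_continuous_on)
  define g0 where "g0 s = f s - f a - (\<Phi> s - \<Phi> a) - \<epsilon> * (s - a)" for s
  have c0: "continuous_on {a..b} g0" unfolding g0_def
    by (intro continuous_intros cont cP)
  have s0: "\<exists>d<0. (g0 has_real_derivative d) (at_right s)" if s: "s \<in> {a..<b}" for s
  proof -
    obtain d where d: "d \<le> \<phi> s" "(f has_real_derivative d) (at_right s)" using der[OF s] by blast
    have "(g0 has_real_derivative d - \<phi> s - \<epsilon>) (at_right s)"
      unfolding g0_def[abs_def] by (rule derivative_eq_intros d(2) DERIV_subset[OF P] | simp)+
    then show ?thesis using d(1) \<epsilon> by (intro exI[of _ "d - \<phi> s - \<epsilon>"]) auto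
  qed
  have "g0 t \<le> 0"
    using barrier[of "{()}" a b "\<lambda>_. g0" t "()"] c0 s0 t by (auto simp: g0_def[of a])
  then have "f t \<le> f a + (\<Phi> t - \<Phi> a) + \<epsilon> * (t - a)" by (simp add: g0_def)
  moreover have "\<epsilon> * (t - a) \<le> e"
  proof -
    have "\<epsilon> * (t - a) \<le> \<epsilon> * (b - a + 1)" using t \<epsilon> by (intro mult_left_mono) auto
    also have "\<dots> = e" using ab by (simp add: \<epsilon>_def)
    finally show ?thesis .
  qed
  ultimately show "f t \<le> f a + (\<Phi> t - \<Phi> a) + e" by simp
qed

lemma cmp_lower:
  fixes f \<Phi> \<phi> :: "real \<Rightarrow> real"
  assumes ab: "a \<le> b" and cont: "continuous_on {a..b} f"
    and der: "\<And>t. t\<in>{a..<b} \<Longrightarrow> \<exists>d. \<phi> t \<le> d \<and> (f has_real_derivative d) (at_right t)"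
    and P: "\<And>t. (\<Phi> has_real_derivative \<phi> t) (at t)"
    and t: "t\<in>{a..b}"
  shows "f a + (\<Phi> t - \<Phi> a) \<le> f t"
proof -
  have "(\<lambda>s. - f s) t \<le> (\<lambda>s. - f s) a + ((\<lambda>s. - \<Phi> s) t - (\<lambda>s. - \<Phi> s) a)"
  proof (rule cmp_upper[OF ab _ _ _ t, where \<phi>="\<lambda>s. - \<phi> s"])
    show "continuous_on {a..b} (\<lambda>s. - f s)" by (intro continuous_intros cont)
    show "((\<lambda>s. - \<Phi> s) has_real_derivative - \<phi> s) (at s)" for s
      by (intro derivative_intros P)
    fix s assume "s \<in> {a..<b}"
    then obtain d where "\<phi> s \<le> d" "(f has_real_derivative d) (at_right s)" using der by blast
    then show "\<exists>d. d \<le> - \<phi> s \<and> ((\<lambda>s. - f s) has_real_derivative d) (at_right s)"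
      by (intro exI[of _ "-d"]) (auto intro: derivative_intros)
  qed
  then show ?thesis by simp
qed

lemma lin_right:
  fixes f :: "real \<Rightarrow> real"
  assumes ab: "a \<le> b" and cont: "continuous_on {a..b} f"
    and der: "\<And>t. t\<in>{a..<b} \<Longrightarrow> (f has_real_derivative c) (at_right t)"
    and t: "t\<in>{a..b}"
  shows "f t = f a + (t - a) * c"
proof -
  have P: "((\<lambda>s. c * s) has_real_derivative c) (at s)" for s
    by (auto intro!: derivative_eq_intros)
  have "f t \<le> f a + (c * t - c * a)"
    by (rule cmp_upper[OF ab cont _ P t]) (use der in auto)
  moreover have "f a + (c * t - c * a) \<le> f t"
    by (rule cmp_lower[OF ab cont _ P t]) (use der in auto)
  ultimately show ?thesis by (simp add: algebra_simps)
qed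

lemma lip_right:
  fixes f :: "real \<Rightarrow> real"
  assumes ab: "a \<le> b" and cont: "continuous_on {a..b} f"
    and der: "\<And>t. t\<in>{a..<b} \<Longrightarrow> \<exists>d. \<bar>d\<bar> \<le> Q \<and> (f has_real_derivative d) (at_right t)"
  shows "\<bar>f b - f a\<bar> \<le> Q * (b - a)"
proof -
  have P: "((\<lambda>s. Q * s) has_real_derivative Q) (at s)" "((\<lambda>s. - Q * s) has_real_derivative - Q) (at s)" for s
    by (auto intro!: derivative_eq_intros)
  have "f b \<le> f a + (Q * b - Q * a)"
  proof (rule cmp_upper[OF ab cont _ P(1)])
    fix t assume "t \<in> {a..<b}"
    then obtain d where "\<bar>d\<bar> \<le> Q" "(f has_real_derivative d) (at_right t)" using der by blast
    then show "\<exists>d\<le>Q. (f has_real_derivative d) (at_right t)" by (intro exI[of _ d]) auto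
  qed (use ab in auto)
  moreover have "f a + (- Q * b - - Q * a) \<le> f b"
  proof (rule cmp_lower[OF ab cont _ P(2)])
    fix t assume "t \<in> {a..<b}"
    then obtain d where "\<bar>d\<bar> \<le> Q" "(f has_real_derivative d) (at_right t)" using der by blast
    then show "\<exists>d\<ge>- Q. (f has_real_derivative d) (at_right t)" by (intro exI[of _ d]) auto
  qed (use ab in auto)
  ultimately show ?thesis by (auto simp: algebra_simps abs_le_iff)
qed




locale sys =
  fixes m :: nat and w :: "nat \<Rightarrow> nat \<Rightarrow> real" and \<beta> :: real
    and x :: "nat \<Rightarrow> real \<Rightarrow> real" and K :: "nat \<Rightarrow> enat" and tt :: "nat \<Rightarrow> nat \<Rightarrow> real"
  assumes wnn: "\<And>i j. w i j \<ge> 0" and wii: "\<And>i. w i i = 0"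
    and bpos: "\<beta> > 0"
    and S: "system_S m w x K tt"
    and ST: "self_triggered \<beta> m w x K tt"
begin

abbreviation "q \<equiv> ctrl m w x"
abbreviation "lt \<equiv> last_trig K tt"

lemma tt0: "i < m \<Longrightarrow> tt i 0 = 0" using ST by (simp add: self_triggered_def)
lemma K0: "i < m \<Longrightarrow> enat 0 < K i" using ST by (simp add: self_triggered_def)
lemma inc: "i < m \<Longrightarrow> enat (Suc k) < K i \<Longrightarrow> tt i k < tt i (Suc k)"
  using ST by (simp add: self_triggered_def)
lemma ST1: "i < m \<Longrightarrow> enat k < K i \<Longrightarrow> tt i k < u \<Longrightarrow> ereal u < next_trig K tt i k \<Longrightarrow>
    ereal u < tau_pred \<beta> m w x K tt i (tt i k) (restart m w K tt i (tt i k) u)"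
  using ST unfolding self_triggered_def by blast
lemma ST2: "i < m \<Longrightarrow> enat (Suc k) < K i \<Longrightarrow>
    tau_pred \<beta> m w x K tt i (tt i k) (restart m w K tt i (tt i k) (tt i (Suc k))) = ereal (tt i (Suc k))"
  using ST unfolding self_triggered_def by (meson Suc_ile_eq order.strict_implies_order)

lemma Kdown: "enat l < K i \<Longrightarrow> k \<le> l \<Longrightarrow> enat k < K i"
  by (meson enat_ord_simps(1) le_less_trans)

lemma mono_tt: "i < m \<Longrightarrow> k < l \<Longrightarrow> enat l < K i \<Longrightarrow> tt i k < tt i l"
proof (induction l)
  case 0 then show ?case by simp
next
  case (Suc l)
  have "tt i l < tt i (Suc l)" using inc Suc by blast
  moreover have "k < l \<Longrightarrow> tt i k < tt i l" using Suc Kdown[of "Suc l" i l] by auto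
  ultimately show ?case using Suc by (cases "k = l") auto
qed

lemma mono_le: "i < m \<Longrightarrow> k \<le> l \<Longrightarrow> enat l < K i \<Longrightarrow> tt i k \<le> tt i l"
  using mono_tt by (cases "k = l") (auto simp: order.strict_implies_order)

lemma tt_nn: "i < m \<Longrightarrow> enat k < K i \<Longrightarrow> tt i k \<ge> 0"
  using mono_le[of i 0 k] tt0 by simp

lemma cont: "i < m \<Longrightarrow> continuous_on {0..} (x i)" using S by (simp add: system_S_def)
lemma der: "i < m \<Longrightarrow> s \<ge> 0 \<Longrightarrow> (x i has_real_derivative q i (lt i s)) (at_right s)"
  using S by (simp add: system_S_def)

lemma LT_ne: "j < m \<Longrightarrow> s \<ge> 0 \<Longrightarrow> {tt j k | k. enat k < K j \<and> tt j k \<le> s} \<noteq> {}"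
  using K0 tt0 by fastforce
lemma LT_bdd: "bdd_above {tt j k | k. enat k < K j \<and> tt j k \<le> s}"
  by (rule bdd_aboveI[of _ s]) auto

lemma lt_upper: "j < m \<Longrightarrow> s \<ge> 0 \<Longrightarrow> enat k < K j \<Longrightarrow> tt j k \<le> s \<Longrightarrow> tt j k \<le> lt j s"
  unfolding last_trig_def by (rule cSup_upper[OF _ LT_bdd]) auto
lemma lt_le: "j < m \<Longrightarrow> s \<ge> 0 \<Longrightarrow> lt j s \<le> s"
  unfolding last_trig_def by (rule cSup_least[OF LT_ne]) auto
lemma lt_nn: "j < m \<Longrightarrow> s \<ge> 0 \<Longrightarrow> 0 \<le> lt j s"
  using lt_upper[of j s 0] K0 tt0 by simp

lemma lt_eqI:
  assumes "j < m" "s \<ge> 0" "v \<ge> 0"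
    and "\<And>k. enat k < K j \<Longrightarrow> tt j k \<le> s \<longleftrightarrow> tt j k \<le> v"
  shows "lt j v = lt j s"
proof -
  have "{tt j k | k. enat k < K j \<and> tt j k \<le> s} = {tt j k | k. enat k < K j \<and> tt j k \<le> v}"
    using assms(4) by blast
  then show ?thesis by (simp add: last_trig_def)
qed

lemma lt_const: "j < m \<Longrightarrow> s \<ge> 0 \<Longrightarrow> lt j s \<le> v \<Longrightarrow> v \<le> s \<Longrightarrow> lt j v = lt j s"
  using lt_nn[of j s] lt_upper[of j s]
  by (intro lt_eqI) (auto intro: order_trans)

lemma lin_gen:
  assumes j: "j < m" and a: "0 \<le> a" "a \<le> b" and c: "\<And>u. u\<in>{a..<b} \<Longrightarrow> lt j u = a"
    and v: "v \<in> {a..b}"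
  shows "x j v = x j a + (v - a) * q j a"
proof (rule lin_right[OF a(2) _ _ v])
  show "continuous_on {a..b} (x j)" using cont[OF j] by (rule continuous_on_subset) (use a in auto)
  fix t assume t: "t \<in> {a..<b}"
  show "(x j has_real_derivative q j a) (at_right t)" using der[OF j, of t] c[OF t] t a by simp
qed

lemma F4:
  assumes "j < m" "s \<ge> 0" "v \<in> {lt j s..s}"
  shows "x j v = x j (lt j s) + (v - lt j s) * q j (lt j s)"
  using assms lt_nn[OF assms(1,2)] lt_le[OF assms(1,2)]
  by (intro lin_gen) (auto intro: lt_const)

lemma own_lt:
  assumes i: "i < m" and k: "enat k < K i" and u: "tt i k \<le> u" "ereal u < next_trig K tt i k"
  shows "lt i u = tt i k"
proof -
  have u0: "u \<ge> 0" using tt_nn[OF i k] u by simp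
  have "lt i u \<le> tt i k"
    unfolding last_trig_def
  proof (rule cSup_least[OF LT_ne[OF i u0]], clarify)
    fix l assume l: "enat l < K i" "tt i l \<le> u"
    show "tt i l \<le> tt i k"
    proof (rule ccontr)
      assume "\<not> tt i l \<le> tt i k"
      then have "k < l" using mono_le[OF i _ k, of l] by (meson not_le_imp_less mono_le[OF i _ l(1)] le_less_linear)
      then have "enat (Suc k) < K i" using Kdown[OF l(1)] by simp
      then have "ereal u < ereal (tt i (Suc k))" using u(2) by (simp add: next_trig_def)
      moreover have "tt i (Suc k) \<le> tt i l" using mono_le[OF i _ l(1)] \<open>k < l\<close> by simp
      ultimately show False using l(2) by simp
    qed
  qed
  moreover have "tt i k \<le> lt i u" using lt_upper[OF i u0 k u(1)] .
  ultimately show ?thesis by simp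
qed

end



context sys begin

definition "Lam = (\<Sum>i<m. \<Sum>j<m. \<bar>lap m w i j\<bar>)"

lemma Lam_nn: "Lam \<ge> 0" unfolding Lam_def by (intro sum_nonneg) auto

lemma sum_lap_bound:
  assumes i: "i < m" and y: "\<And>j. j < m \<Longrightarrow> \<bar>y j\<bar> \<le> Y"
  shows "\<bar>\<Sum>j<m. lap m w i j * y j\<bar> \<le> Lam * Y"
proof -
  have Y: "Y \<ge> 0" using y[OF i] by simp
  have "\<bar>\<Sum>j<m. lap m w i j * y j\<bar> \<le> (\<Sum>j<m. \<bar>lap m w i j * y j\<bar>)" by (rule sum_abs)
  also have "\<dots> \<le> (\<Sum>j<m. \<bar>lap m w i j\<bar> * Y)"
    by (intro sum_mono) (auto simp: abs_mult intro: mult_left_mono y)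
  also have "\<dots> = (\<Sum>j<m. \<bar>lap m w i j\<bar>) * Y" by (simp add: sum_distrib_right)
  also have "\<dots> \<le> Lam * Y"
  proof (rule mult_right_mono[OF _ Y])
    show "(\<Sum>j<m. \<bar>lap m w i j\<bar>) \<le> Lam" unfolding Lam_def
      by (rule member_le_sum[of i "{..<m}" "\<lambda>i. \<Sum>j<m. \<bar>lap m w i j\<bar>"]) (use i in \<open>auto intro: sum_nonneg\<close>)
  qed
  finally show ?thesis .
qed

lemma xbound: "\<exists>X. \<forall>j<m. \<forall>t\<in>{0..B}. \<bar>x j t\<bar> \<le> X"
proof (cases "B \<ge> 0")
  case True
  have "\<forall>j<m. \<exists>X. \<forall>t\<in>{0..B}. \<bar>x j t\<bar> \<le> X"
  proof (intro allI impI)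
    fix j assume j: "j < m"
    have "continuous_on {0..B} (\<lambda>t. \<bar>x j t\<bar>)"
      by (intro continuous_intros continuous_on_subset[OF cont[OF j]]) auto
    then obtain s where "s\<in>{0..B}" "\<forall>t\<in>{0..B}. \<bar>x j t\<bar> \<le> \<bar>x j s\<bar>"
      using continuous_attains_sup[of "{0..B}" "\<lambda>t. \<bar>x j t\<bar>"] True by auto
    then show "\<exists>X. \<forall>t\<in>{0..B}. \<bar>x j t\<bar> \<le> X" by blast
  qed
  then obtain f where f: "\<forall>j<m. \<forall>t\<in>{0..B}. \<bar>x j t\<bar> \<le> f j" by metis
  have "\<bar>x j t\<bar> \<le> (\<Sum>l<m. \<bar>f l\<bar>)" if "j < m" "t \<in> {0..B}" for j t
  proof -
    have "\<bar>x j t\<bar> \<le> \<bar>f j\<bar>" using f that by force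
    also have "\<dots> \<le> (\<Sum>l<m. \<bar>f l\<bar>)" by (rule member_le_sum) (use that in auto)
    finally show ?thesis .
  qed
  then show ?thesis by blast
qed auto

lemma q_bound: "i < m \<Longrightarrow> (\<And>j. j < m \<Longrightarrow> \<bar>x j t\<bar> \<le> X) \<Longrightarrow> \<bar>q i t\<bar> \<le> Lam * X"
  using sum_lap_bound[of i "\<lambda>j. x j t" X] by (simp add: ctrl_def)

lemma q_diff: "i < m \<Longrightarrow> (\<And>j. j < m \<Longrightarrow> \<bar>x j t - x j s\<bar> \<le> Y) \<Longrightarrow> \<bar>q i t - q i s\<bar> \<le> Lam * Y"
proof -
  assume i: "i < m" and y: "\<And>j. j < m \<Longrightarrow> \<bar>x j t - x j s\<bar> \<le> Y"
  have "q i t - q i s = - (\<Sum>j<m. lap m w i j * (x j t - x j s))"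
    by (simp add: ctrl_def algebra_simps sum_subtractf)
  then show ?thesis using sum_lap_bound[of i "\<lambda>j. x j t - x j s" Y, OF i y] by simp
qed

lemma x_lip:
  assumes X: "\<forall>j<m. \<forall>t\<in>{0..B}. \<bar>x j t\<bar> \<le> X" and j: "j < m" and uv: "0 \<le> u" "u \<le> v" "v \<le> B"
  shows "\<bar>x j v - x j u\<bar> \<le> (Lam * X) * (v - u)"
proof (rule lip_right[OF uv(2)])
  show "continuous_on {u..v} (x j)" using cont[OF j] by (rule continuous_on_subset) (use uv in auto)
  fix t assume t: "t \<in> {u..<v}"
  have t0: "t \<ge> 0" using t uv by auto
  have "\<bar>q j (lt j t)\<bar> \<le> Lam * X"
    using lt_nn[OF j t0] lt_le[OF j t0] t uv X by (intro q_bound[OF j]) auto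
  then show "\<exists>d. \<bar>d\<bar> \<le> Lam * X \<and> (x j has_real_derivative d) (at_right t)"
    using der[OF j t0] by blast
qed

lemma restart_bnd:
  assumes "tk \<le> u"
  shows "tk \<le> restart m w K tt i tk u" "restart m w K tt i tk u \<le> u"
proof -
  let ?R = "{tk} \<union> {tt p l | p l. p < m \<and> w i p > 0 \<and> enat l < K p \<and> tk < tt p l \<and> tt p l < u}"
  have bdd: "bdd_above ?R" by (rule bdd_aboveI[of _ u]) (use assms in auto)
  show "tk \<le> restart m w K tt i tk u" unfolding restart_def by (rule cSup_upper[OF _ bdd]) auto
  show "restart m w K tt i tk u \<le> u" unfolding restart_def by (rule cSup_least) (use assms in auto)
qed

lemma restart_upper:
  assumes "tk \<le> u" "p < m" "w i p > 0" "enat l < K p" "tk < tt p l" "tt p l < u"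
  shows "tt p l \<le> restart m w K tt i tk u"
proof -
  let ?R = "{tk} \<union> {tt p l | p l. p < m \<and> w i p > 0 \<and> enat l < K p \<and> tk < tt p l \<and> tt p l < u}"
  have bdd: "bdd_above ?R" by (rule bdd_aboveI[of _ u]) (use assms in auto)
  show ?thesis unfolding restart_def by (rule cSup_upper[OF _ bdd]) (use assms in blast)
qed

lemma qpred_eq:
  assumes i: "i < m" and own: "x i tk + (v - tk) * q i tk = x i v"
    and oth: "\<And>j. j < m \<Longrightarrow> j \<noteq> i \<Longrightarrow> w i j > 0 \<Longrightarrow>
       x j (lt j s) + (v - lt j s) * q j (lt j s) = x j v"
  shows "qpred m w x K tt i tk s v = q i v"
proof -
  have "(\<Sum>j\<in>{..<m} - {i}. lap m w i j * (x j (lt j s) + (v - lt j s) * q j (lt j s)))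
      = (\<Sum>j\<in>{..<m} - {i}. lap m w i j * x j v)"
  proof (rule sum.cong[OF refl])
    fix j assume j: "j \<in> {..<m} - {i}"
    show "lap m w i j * (x j (lt j s) + (v - lt j s) * q j (lt j s)) = lap m w i j * x j v"
    proof (cases "w i j > 0")
      case True then show ?thesis using oth j by auto
    next
      case False then have "w i j = 0" using wnn[of i j] by simp
      then show ?thesis using j by (simp add: lap_def)
    qed
  qed
  moreover have "(\<Sum>j<m. lap m w i j * x j v) = lap m w i i * x i v + (\<Sum>j\<in>{..<m} - {i}. lap m w i j * x j v)"
    using i by (subst sum.remove[of _ i]) auto
  ultimately show ?thesis using own by (simp add: qpred_def ctrl_def)
qed

lemma qpred_affine:
  assumes i: "i < m"
  shows "qpred m w x K tt i tk s v = qpred m w x K tt i tk s s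
     - (v - s) * (\<Sum>j<m. lap m w i j * (if j = i then q i tk else q j (lt j s)))"
proof -
  have e: "(\<Sum>j<m. lap m w i j * (if j = i then q i tk else q j (lt j s)))
     = lap m w i i * q i tk + (\<Sum>j\<in>{..<m} - {i}. lap m w i j * q j (lt j s))"
    using i by (subst sum.remove[of _ i]) (auto intro!: sum.cong)
  have "(\<Sum>j\<in>{..<m} - {i}. lap m w i j * (x j (lt j s) + (v - lt j s) * q j (lt j s)))
      = (\<Sum>j\<in>{..<m} - {i}. lap m w i j * (x j (lt j s) + (s - lt j s) * q j (lt j s)))
        + (v - s) * (\<Sum>j\<in>{..<m} - {i}. lap m w i j * q j (lt j s))"
    by (simp add: sum_distrib_left sum.distrib[symmetric] algebra_simps)
  then show ?thesis unfolding e by (simp add: qpred_def algebra_simps)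
qed

end



context sys begin

lemma gap:
  assumes B: "B \<ge> 0" and X: "\<forall>j<m. \<forall>t\<in>{0..B+1}. \<bar>x j t\<bar> \<le> X"
    and i: "i < m" and k: "enat (Suc k) < K i" and t1B: "tt i (Suc k) \<le> B"
  shows "exp (- \<beta> * (B+1)) \<le> (Lam * (Lam * X)) * (tt i (Suc k) - tt i k)"
proof -
  define tk where "tk = tt i k"
  define t1 where "t1 = tt i (Suc k)"
  define s where "s = restart m w K tt i tk t1"
  define L where "L = Lam * (Lam * X)"
  define E where "E = exp (- \<beta> * (B+1))"
  have k': "enat k < K i" using Kdown[OF k] by simp
  have tk0: "tk \<ge> 0" unfolding tk_def using tt_nn[OF i k'] .
  have tkt1: "tk < t1" unfolding tk_def t1_def using inc[OF i k] .
  have s: "tk \<le> s" "s \<le> t1" unfolding s_def using restart_bnd[of tk t1] tkt1 by auto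
  have "\<bar>x i 0\<bar> \<le> X" using X i B by auto
  then have X0: "X \<ge> 0" by (meson abs_ge_zero order_trans)
  have LX0: "Lam * X \<ge> 0" using Lam_nn X0 by simp
  have L0: "L \<ge> 0" unfolding L_def using Lam_nn LX0 by simp
  have nt: "next_trig K tt i k = ereal t1" using k by (simp add: next_trig_def t1_def)
  have own: "x i tk + (s - tk) * q i tk = x i s"
  proof -
    have "x i s = x i tk + (s - tk) * q i tk"
    proof (rule lin_gen[OF i tk0 order.strict_implies_order[OF tkt1]])
      fix u assume "u \<in> {tk..<t1}"
      then show "lt i u = tk" using own_lt[OF i k', of u] nt by (simp add: tk_def)
    qed (use s in auto)
    then show ?thesis by simp
  qed
  have s0: "s \<ge> 0" using tk0 s by simp
  have qs: "qpred m w x K tt i tk s s = q i s"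
  proof (rule qpred_eq[OF i own])
    fix j assume j: "j < m"
    show "x j (lt j s) + (s - lt j s) * q j (lt j s) = x j s"
      using F4[OF j s0, of s] lt_le[OF j s0] by simp
  qed
  have qb: "\<bar>q j r\<bar> \<le> Lam * X" if "j < m" "0 \<le> r" "r \<le> B + 1" for j r
    using X that by (intro q_bound) auto
  have key: "E < L * (t1 - tk) + L * \<gamma>" if g: "0 < \<gamma>" "\<gamma> \<le> 1" for \<gamma>
  proof -
    let ?c = "\<lambda>u. \<bar>ctrl m w x i tk - qpred m w x K tt i tk s u\<bar> \<le> exp (- \<beta> * u)"
    let ?Z = "{ereal \<tau> | \<tau>. s \<le> \<tau> \<and> (\<forall>u\<in>{s..\<tau>}. ?c u)}"
    have supZ: "Sup ?Z = ereal t1"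
      using ST2[OF i k] by (simp add: tau_pred_def s_def tk_def t1_def)
    have "\<exists>v. t1 \<le> v \<and> v \<le> t1 + \<gamma> \<and> \<not> ?c v"
    proof (rule ccontr)
      assume na: "\<not> (\<exists>v. t1 \<le> v \<and> v \<le> t1 + \<gamma> \<and> \<not> ?c v)"
      have "\<forall>u\<in>{s..t1+\<gamma>}. ?c u"
      proof
        fix u assume u: "u \<in> {s..t1+\<gamma>}"
        show "?c u"
        proof (cases "u < t1")
          case True
          then have "ereal u < Sup ?Z" using supZ by simp
          then obtain z where "z \<in> ?Z" "ereal u < z" using less_Sup_iff by blast
          then obtain \<tau> where "z = ereal \<tau>" "s \<le> \<tau>" "\<forall>u\<in>{s..\<tau>}. ?c u" by blast
          then show ?thesis using \<open>ereal u < z\<close> u by auto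
        next
          case False then show ?thesis using na u by auto
        qed
      qed
      then have "ereal (t1 + \<gamma>) \<in> ?Z" using s g by auto
      then have "ereal (t1 + \<gamma>) \<le> Sup ?Z" by (rule Sup_upper)
      then show False using supZ g by simp
    qed
    then obtain v where v: "t1 \<le> v" "v \<le> t1 + \<gamma>" "\<not> ?c v" by blast
    have vB: "v \<le> B + 1" using v t1B g unfolding t1_def by simp
    have "E \<le> exp (- \<beta> * v)" unfolding E_def using vB bpos by simp
    also have "\<dots> < \<bar>q i tk - qpred m w x K tt i tk s v\<bar>" using v(3) by simp
    also have "\<dots> \<le> \<bar>q i tk - q i s\<bar> + \<bar>q i s - qpred m w x K tt i tk s v\<bar>" by simp
    also have "\<dots> \<le> L * (s - tk) + L * (v - s)"
    proof (rule add_mono)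
      have "\<bar>q i s - q i tk\<bar> \<le> Lam * ((Lam * X) * (s - tk))"
        by (rule q_diff[OF i]) (rule x_lip[OF X], use tk0 s t1B vB v in \<open>auto simp: t1_def\<close>)
      then show "\<bar>q i tk - q i s\<bar> \<le> L * (s - tk)" by (simp add: L_def abs_minus_commute algebra_simps)
      have "qpred m w x K tt i tk s v = q i s
          - (v - s) * (\<Sum>j<m. lap m w i j * (if j = i then q i tk else q j (lt j s)))"
        using qpred_affine[OF i, of tk s v] qs by simp
      then have "\<bar>q i s - qpred m w x K tt i tk s v\<bar>
          = (v - s) * \<bar>\<Sum>j<m. lap m w i j * (if j = i then q i tk else q j (lt j s))\<bar>"
        using v s by (simp add: abs_mult)
      also have "\<dots> \<le> (v - s) * (Lam * (Lam * X))"
      proof (rule mult_left_mono)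
        show "\<bar>\<Sum>j<m. lap m w i j * (if j = i then q i tk else q j (lt j s))\<bar> \<le> Lam * (Lam * X)"
        proof (rule sum_lap_bound[OF i])
          fix j assume j: "j < m"
          show "\<bar>if j = i then q i tk else q j (lt j s)\<bar> \<le> Lam * X"
            using qb[OF i tk0] qb[OF j lt_nn[OF j s0]] lt_le[OF j s0] s vB v by auto
        qed
      qed (use v s in auto)
      finally show "\<bar>q i s - qpred m w x K tt i tk s v\<bar> \<le> L * (v - s)" by (simp add: L_def algebra_simps)
    qed
    also have "\<dots> = L * (v - tk)" by (simp add: algebra_simps)
    also have "\<dots> \<le> L * (t1 - tk) + L * \<gamma>"
    proof -
      have "L * v \<le> L * (t1 + \<gamma>)" using v L0 by (intro mult_left_mono) auto
      then show ?thesis by (simp add: algebra_simps)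
    qed
    finally show ?thesis .
  qed
  have "E \<le> L * (t1 - tk)"
  proof (rule field_le_epsilon)
    fix e :: real assume e: "e > 0"
    define \<gamma> where "\<gamma> = min 1 (e / (L + 1))"
    have g: "0 < \<gamma>" "\<gamma> \<le> 1" using e L0 by (auto simp: \<gamma>_def)
    have "L * \<gamma> \<le> L * (e / (L + 1))" using L0 by (intro mult_left_mono) (auto simp: \<gamma>_def)
    also have "\<dots> \<le> e" using L0 e by (simp add: field_simps)
    finally show "E \<le> L * (t1 - tk) + e" using key[OF g] by simp
  qed
  then show ?thesis by (simp add: E_def L_def t1_def tk_def)
qed

lemma zeno: "i < m \<Longrightarrow> finite {k. enat k < K i \<and> tt i k \<le> B}"
proof -
  assume i: "i < m"
  define B' where "B' = max B 0"
  have B': "B' \<ge> 0" "B \<le> B'" by (auto simp: B'_def)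
  obtain X where X: "\<forall>j<m. \<forall>t\<in>{0..B'+1}. \<bar>x j t\<bar> \<le> X" using xbound by blast
  define L where "L = Lam * (Lam * X)"
  have "\<bar>x i 0\<bar> \<le> X" using X i B' by auto
  then have X0: "X \<ge> 0" by (meson abs_ge_zero order_trans)
  have L0: "L \<ge> 0" unfolding L_def using Lam_nn X0 by simp
  define \<delta> where "\<delta> = exp (- \<beta> * (B'+1)) / (L + 1)"
  have d0: "\<delta> > 0" using L0 by (simp add: \<delta>_def)
  have gapd: "\<delta> \<le> tt i (Suc k) - tt i k" if "enat (Suc k) < K i" "tt i (Suc k) \<le> B'" for k
  proof -
    have g: "exp (- \<beta> * (B'+1)) \<le> L * (tt i (Suc k) - tt i k)"
      using gap[OF B'(1) X i that] by (simp add: L_def)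
    have pos: "tt i (Suc k) - tt i k > 0" using inc[OF i that(1)] by simp
    have "L * (tt i (Suc k) - tt i k) \<le> (L + 1) * (tt i (Suc k) - tt i k)"
      using pos by (intro mult_right_mono) auto
    with g have "exp (- \<beta> * (B'+1)) \<le> (L + 1) * (tt i (Suc k) - tt i k)" by simp
    then show ?thesis using L0 by (simp add: \<delta>_def divide_le_eq mult.commute)
  qed
  have lin: "real k * \<delta> \<le> tt i k" if "enat k < K i" "tt i k \<le> B'" for k
    using that
  proof (induction k)
    case 0 then show ?case using tt0[OF i] by simp
  next
    case (Suc k)
    have k': "enat k < K i" using Kdown[OF Suc.prems(1)] by simp
    have "tt i k < tt i (Suc k)" using inc[OF i Suc.prems(1)] .
    then have "real k * \<delta> \<le> tt i k" using Suc k' by simp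
    moreover have "\<delta> \<le> tt i (Suc k) - tt i k" using gapd Suc.prems by simp
    ultimately show ?case by (simp add: algebra_simps)
  qed
  have "{k. enat k < K i \<and> tt i k \<le> B} \<subseteq> {..nat \<lceil>B' / \<delta>\<rceil>}"
  proof
    fix k assume "k \<in> {k. enat k < K i \<and> tt i k \<le> B}"
    then have k: "enat k < K i" "tt i k \<le> B'" using B' by auto
    have "real k * \<delta> \<le> B'" using lin[OF k] k by simp
    then have "real k \<le> B' / \<delta>" using d0 by (simp add: le_divide_eq)
    then have "real k \<le> real (nat \<lceil>B' / \<delta>\<rceil>)" by linarith
    then show "k \<in> {..nat \<lceil>B' / \<delta>\<rceil>}" by simp
  qed
  then show ?thesis by (rule finite_subset) simp
qed

end



context sys begin

lemma ctrl_eq: "i < m \<Longrightarrow> ctrl m w y i t = (\<Sum>j<m. w i j * (y j t - y i t))"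
proof -
  assume i: "i < m"
  have "(\<Sum>j<m. lap m w i j * y j t) = (\<Sum>j<m. (if i = j then (\<Sum>k<m. w i k) else 0) * y j t) - (\<Sum>j<m. w i j * y j t)"
    by (simp add: lap_def left_diff_distrib sum_subtractf)
  also have "(\<Sum>j<m. (if i = j then (\<Sum>k<m. w i k) else 0) * y j t) = (\<Sum>k<m. w i k) * y i t"
  proof -
    have "(\<Sum>j<m. (if i = j then (\<Sum>k<m. w i k) else 0) * y j t) = (\<Sum>j<m. if i = j then (\<Sum>k<m. w i k) * y i t else 0)"
      by (rule sum.cong) auto
    then show ?thesis using i by simp
  qed
  finally show ?thesis
    by (simp add: ctrl_def right_diff_distrib sum_subtractf sum_distrib_right)
qed

lemma err:
  assumes i: "i < m" and t0: "t \<ge> 0"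
  shows "\<bar>q i (lt i t) - q i t\<bar> \<le> exp (- \<beta> * t)"
proof -
  let ?LT = "{tt i k | k. enat k < K i \<and> tt i k \<le> t}"
  have "?LT = (\<lambda>k. tt i k) ` {k. enat k < K i \<and> tt i k \<le> t}" by auto
  then have fin: "finite ?LT" using zeno[OF i, of t] by simp
  have "Max ?LT \<in> ?LT" by (rule Max_in[OF fin LT_ne[OF i t0]])
  moreover have "lt i t = Max ?LT" unfolding last_trig_def
    using fin LT_ne[OF i t0] by (rule cSup_eq_Max)
  ultimately have "lt i t \<in> ?LT" by simp
  then obtain k where k: "enat k < K i" "tt i k \<le> t" "tt i k = lt i t"
    by (smt (verit, best) mem_Collect_eq)
  show ?thesis
  proof (cases "tt i k = t")
    case True then show ?thesis using k by simp
  next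
    case False
    define tk where "tk = tt i k"
    have tkt: "tk < t" using False k by (simp add: tk_def)
    have tk0: "tk \<ge> 0" using tt_nn[OF i k(1)] by (simp add: tk_def)
    have nt: "ereal t < next_trig K tt i k"
    proof (cases "enat (Suc k) < K i")
      case True
      have "\<not> tt i (Suc k) \<le> t"
      proof
        assume "tt i (Suc k) \<le> t"
        then have "tt i (Suc k) \<le> lt i t" using lt_upper[OF i t0 True] by simp
        then show False using inc[OF i True] k by simp
      qed
      then show ?thesis using True by (simp add: next_trig_def)
    qed (simp add: next_trig_def)
    define s where "s = restart m w K tt i tk t"
    have s: "tk \<le> s" "s \<le> t" unfolding s_def using restart_bnd[of tk t] tkt by auto
    have s0: "s \<ge> 0" using s tk0 by simp
    have "ereal t < tau_pred \<beta> m w x K tt i tk s"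
      using ST1[OF i k(1), of t] tkt nt by (simp add: tk_def s_def)
    then obtain z where z: "z \<in> {ereal \<tau> | \<tau>. s \<le> \<tau> \<and>
           (\<forall>u\<in>{s..\<tau>}. \<bar>ctrl m w x i tk - qpred m w x K tt i tk s u\<bar> \<le> exp (- \<beta> * u))}" "ereal t < z"
      unfolding tau_pred_def using less_Sup_iff by blast
    then have cond: "\<bar>q i tk - qpred m w x K tt i tk s t\<bar> \<le> exp (- \<beta> * t)"
      using s by auto
    have "qpred m w x K tt i tk s t = q i t"
    proof (rule qpred_eq[OF i])
      show "x i tk + (t - tk) * q i tk = x i t"
        using F4[OF i t0, of t] lt_le[OF i t0] k by (simp add: tk_def)
    next
      fix j assume j: "j < m" "j \<noteq> i" "w i j > 0"
      have a: "0 \<le> lt j s" "lt j s \<le> t" using lt_nn[OF j(1) s0] lt_le[OF j(1) s0] s by auto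
      have "x j t = x j (lt j s) + (t - lt j s) * q j (lt j s)"
      proof (rule lin_gen[OF j(1) a])
        fix u assume u: "u \<in> {lt j s..<t}"
        show "lt j u = lt j s"
        proof (cases "u \<le> s")
          case True then show ?thesis using lt_const[OF j(1) s0, of u] u by simp
        next
          case False
          show ?thesis
          proof (rule lt_eqI[OF j(1) s0])
            show "u \<ge> 0" using False s0 by simp
            fix l assume l: "enat l < K j"
            show "tt j l \<le> s \<longleftrightarrow> tt j l \<le> u"
            proof
              assume "tt j l \<le> s" then show "tt j l \<le> u" using False by simp
            next
              assume lu: "tt j l \<le> u"
              show "tt j l \<le> s"
              proof (cases "tt j l \<le> tk")
                case True then show ?thesis using s by simp
              next
                case False
                have "tt j l < t" using lu u by simp
                then show ?thesis unfolding s_def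
                  using restart_upper[of tk t j i l] tkt j(1,3) l False by simp
              qed
            qed
          qed
        qed
      qed (use a in auto)
      then show "x j (lt j s) + (t - lt j s) * q j (lt j s) = x j t" by simp
    qed
    then show ?thesis using cond k by (simp add: tk_def)
  qed
qed

lemma ode: "i < m \<Longrightarrow> t \<ge> 0 \<Longrightarrow> \<exists>e. \<bar>e\<bar> \<le> exp (- \<beta> * t) \<and>
   (x i has_real_derivative (\<Sum>j<m. w i j * (x j t - x i t)) + e) (at_right t)"
  using der[of i t] err[of i t] ctrl_eq[of i x t]
  by (intro exI[of _ "q i (lt i t) - q i t"]) auto

end



locale grph =
  fixes m :: nat and w :: "nat \<Rightarrow> nat \<Rightarrow> real" and \<beta> :: real
  assumes wnn: "\<And>i j. w i j \<ge> 0" and bpos: "\<beta> > 0"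
begin

definition odeP :: "(nat \<Rightarrow> real \<Rightarrow> real) \<Rightarrow> bool" where
  "odeP y \<longleftrightarrow> (\<forall>i<m. continuous_on {0..} (y i) \<and>
     (\<forall>t\<ge>0. \<exists>e. \<bar>e\<bar> \<le> exp (- \<beta> * t) \<and>
        (y i has_real_derivative (\<Sum>j<m. w i j * (y j t - y i t)) + e) (at_right t)))"

lemma odeP_neg: "odeP y \<Longrightarrow> odeP (\<lambda>i t. - y i t)"
  unfolding odeP_def
proof (intro allI impI conjI)
  fix i and t :: real assume y: "\<forall>i<m. continuous_on {0..} (y i) \<and> (\<forall>t\<ge>0. \<exists>e. \<bar>e\<bar> \<le> exp (- \<beta> * t) \<and>
        (y i has_real_derivative (\<Sum>j<m. w i j * (y j t - y i t)) + e) (at_right t))"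
    and i: "i < m"
  show "continuous_on {0..} (\<lambda>t. - y i t)" using y i by (auto intro: continuous_intros)
  assume t: "0 \<le> t"
  obtain e where e: "\<bar>e\<bar> \<le> exp (- \<beta> * t)"
    "(y i has_real_derivative (\<Sum>j<m. w i j * (y j t - y i t)) + e) (at_right t)"
    using y i t by blast
  have "((\<lambda>t. - y i t) has_real_derivative - ((\<Sum>j<m. w i j * (y j t - y i t)) + e)) (at_right t)"
    using e(2) by (rule derivative_intros)
  moreover have "- ((\<Sum>j<m. w i j * (y j t - y i t)) + e) = (\<Sum>j<m. w i j * (- y j t - - y i t)) + - e"
    by (simp add: sum_negf[symmetric] algebra_simps)
  ultimately show "\<exists>e. \<bar>e\<bar> \<le> exp (- \<beta> * t) \<and>
      ((\<lambda>t. - y i t) has_real_derivative (\<Sum>j<m. w i j * (- y j t - - y i t)) + e) (at_right t)"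
    using e(1) by (intro exI[of _ "-e"]) auto
qed

definition EE :: "real \<Rightarrow> real \<Rightarrow> real" where "EE a s = (exp (- \<beta> * a) - exp (- \<beta> * s)) / \<beta>"

lemma EE_der: "(EE a has_real_derivative exp (- \<beta> * s)) (at s within S)"
  unfolding EE_def[abs_def] using bpos
  by (auto intro!: derivative_eq_intros simp: field_simps)

lemma EE_le: "a \<le> s \<Longrightarrow> EE a s \<le> exp (- \<beta> * a) / \<beta>"
  using bpos by (simp add: EE_def divide_right_mono)

lemma EE_nn: "a \<le> s \<Longrightarrow> 0 \<le> EE a s"
  using bpos by (simp add: EE_def)

lemma ode_cmp:
  assumes y: "odeP y" and ab: "0 \<le> a" "a \<le> b" and I: "I \<subseteq> {..<m}"
    and start: "\<And>i. i \<in> I \<Longrightarrow> y i a \<le> \<alpha> i"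
    and step: "\<And>s i \<delta> e. s \<in> {a..<b} \<Longrightarrow> i \<in> I \<Longrightarrow> \<delta> \<ge> 0 \<Longrightarrow>
        (\<forall>j\<in>I. y j s \<le> \<alpha> j + \<kappa> j * (s - a) + EE a s + \<delta>) \<Longrightarrow>
        y i s = \<alpha> i + \<kappa> i * (s - a) + EE a s + \<delta> \<Longrightarrow> \<bar>e\<bar> \<le> exp (- \<beta> * s) \<Longrightarrow>
        (\<Sum>j<m. w i j * (y j s - y i s)) + e \<le> \<kappa> i + exp (- \<beta> * s)"
    and i: "i \<in> I" and s: "s \<in> {a..b}"
  shows "y i s \<le> \<alpha> i + \<kappa> i * (s - a) + EE a s"
proof (rule field_le_epsilon)
  fix e :: real assume e: "e > 0"
  define \<epsilon> where "\<epsilon> = e / (b - a + 1)"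
  have \<epsilon>: "\<epsilon> > 0" using e ab by (simp add: \<epsilon>_def)
  define g where "g j s = y j s - (\<alpha> j + \<kappa> j * (s - a) + EE a s) - \<epsilon> * (s - a)" for j s
  have fin: "finite I" using I finite_subset by blast
  have "g i s \<le> 0"
  proof (rule barrier[OF fin _ _ _ s i])
    fix j assume j: "j \<in> I"
    have "continuous_on {0..} (y j)" using y j I unfolding odeP_def by auto
    then have "continuous_on {a..b} (y j)" by (rule continuous_on_subset) (use ab in auto)
    moreover have "continuous_on {a..b} (EE a)"
      using EE_der by (meson DERIV_isCont continuous_at_imp_continuous_on)
    ultimately show "continuous_on {a..b} (g j)" unfolding g_def[abs_def]
      by (intro continuous_intros) auto
    show "g j a \<le> 0" using start[OF j] by (simp add: g_def EE_def)
  next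
    fix t j assume t: "t \<in> {a..<b}" and j: "j \<in> I" and all: "\<forall>l\<in>I. g l t \<le> 0" and gj: "g j t = 0"
    have t0: "t \<ge> 0" using t ab by auto
    obtain ee where ee: "\<bar>ee\<bar> \<le> exp (- \<beta> * t)"
      "(y j has_real_derivative (\<Sum>l<m. w j l * (y l t - y j t)) + ee) (at_right t)"
      using y j I t0 unfolding odeP_def by blast
    have le: "(\<Sum>l<m. w j l * (y l t - y j t)) + ee \<le> \<kappa> j + exp (- \<beta> * t)"
    proof (rule step[OF t j _ _ _ ee(1), of "\<epsilon> * (t - a)"])
      show "0 \<le> \<epsilon> * (t - a)" using \<epsilon> t by auto
      show "\<forall>l\<in>I. y l t \<le> \<alpha> l + \<kappa> l * (t - a) + EE a t + \<epsilon> * (t - a)"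
        using all by (auto simp: g_def)
      show "y j t = \<alpha> j + \<kappa> j * (t - a) + EE a t + \<epsilon> * (t - a)"
        using gj by (simp add: g_def)
    qed
    have "(g j has_real_derivative ((\<Sum>l<m. w j l * (y l t - y j t)) + ee) - (\<kappa> j + exp (- \<beta> * t)) - \<epsilon>) (at_right t)"
      unfolding g_def[abs_def]
      by (rule derivative_eq_intros ee(2) EE_der refl | simp)+
    then show "\<exists>d<0. (g j has_real_derivative d) (at_right t)"
      using le \<epsilon> by (intro exI[of _ "((\<Sum>l<m. w j l * (y l t - y j t)) + ee) - (\<kappa> j + exp (- \<beta> * t)) - \<epsilon>"]) auto
  qed
  then have "y i s \<le> \<alpha> i + \<kappa> i * (s - a) + EE a s + \<epsilon> * (s - a)" by (simp add: g_def)
  moreover have "\<epsilon> * (s - a) \<le> e"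
  proof -
    have "\<epsilon> * (s - a) \<le> \<epsilon> * (b - a + 1)" using s \<epsilon> by (intro mult_left_mono) auto
    also have "\<dots> = e" using ab by (simp add: \<epsilon>_def)
    finally show ?thesis .
  qed
  ultimately show "y i s \<le> \<alpha> i + \<kappa> i * (s - a) + EE a s + e" by simp
qed

lemma upper:
  assumes y: "odeP y" and t0: "t0 \<ge> 0" and hi: "\<And>j. j < m \<Longrightarrow> y j t0 \<le> hi"
    and i: "i < m" and t: "t0 \<le> t"
  shows "y i t \<le> hi + exp (- \<beta> * t0) / \<beta>"
proof -
  have "y i t \<le> hi + 0 * (t - t0) + EE t0 t"
  proof (rule ode_cmp[OF y t0 t, of "{..<m}" "\<lambda>_. hi" "\<lambda>_. 0"])
    fix s j \<delta> e assume s: "s \<in> {t0..<t}" and j: "j \<in> {..<m}" and \<delta>: "\<delta> \<ge> 0"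
      and all: "\<forall>l\<in>{..<m}. y l s \<le> hi + 0 * (s - t0) + EE t0 s + \<delta>"
      and eq: "y j s = hi + 0 * (s - t0) + EE t0 s + \<delta>" and e: "\<bar>e\<bar> \<le> exp (- \<beta> * s)"
    have "(\<Sum>l<m. w j l * (y l s - y j s)) \<le> 0"
      using all eq wnn by (intro sum_nonpos) (auto intro: mult_nonneg_nonpos)
    then show "(\<Sum>l<m. w j l * (y l s - y j s)) + e \<le> 0 + exp (- \<beta> * s)" using e by simp
  qed (use hi i t in auto)
  then show ?thesis using EE_le[OF t] by simp
qed

lemma lower:
  assumes y: "odeP y" and t0: "t0 \<ge> 0" and lo: "\<And>j. j < m \<Longrightarrow> lo \<le> y j t0"
    and i: "i < m" and t: "t0 \<le> t"
  shows "lo - exp (- \<beta> * t0) / \<beta> \<le> y i t"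
  using upper[OF odeP_neg[OF y] t0, of "- lo" i t] lo i t by force

end



locale grph2 = grph +
  fixes r :: nat and N :: nat and D :: real
  assumes r: "r < m" and N1: "N \<ge> 1" and D1: "D \<ge> 1"
    and Dw: "\<And>i. i < m \<Longrightarrow> (\<Sum>j<m. w i j) \<le> D"
    and paths: "\<And>i. i < m \<Longrightarrow> \<exists>n\<le>N. (edge m w ^^ n) r i"
begin

definition "h = 1 / (4 * D * real N)"

lemma h_pos: "h > 0" using D1 N1 by (simp add: h_def)
lemma DNh: "D * (real N * h) = 1/4" using D1 N1 by (simp add: h_def)

lemma root:
  assumes y: "odeP y" and t0: "t0 \<ge> 0" and b: "\<forall>j<m. lo \<le> y j t0 \<and> y j t0 \<le> hi"
    and mid: "y r t0 \<le> (lo + hi) / 2" and t: "t0 \<le> t" "t \<le> t0 + N * h"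
  shows "y r t \<le> hi + exp (- \<beta> * t0) / \<beta> - (1/4) * (hi - lo) + (1/2) * (exp (- \<beta> * t0) / \<beta>)"
proof -
  define P where "P = exp (- \<beta> * t0) / \<beta>"
  have P0: "P \<ge> 0" using bpos by (simp add: P_def)
  have V0: "hi - lo \<ge> 0" using b r by force
  define \<kappa> where "\<kappa> = D * (hi - lo + 2 * P)"
  have k0: "\<kappa> \<ge> 0" using D1 V0 P0 by (simp add: \<kappa>_def)
  have "y r t \<le> y r t0 + \<kappa> * (t - t0) + EE t0 t"
  proof (rule ode_cmp[OF y t0 t(1), of "{r}" "\<lambda>_. y r t0" "\<lambda>_. \<kappa>"])
    fix s j \<delta> e assume s: "s \<in> {t0..<t}" and j: "j \<in> {r}" and e: "\<bar>e\<bar> \<le> exp (- \<beta> * s)"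
    have "(\<Sum>l<m. w r l * (y l s - y r s)) \<le> (\<Sum>l<m. w r l * (hi - lo + 2 * P))"
    proof (rule sum_mono)
      fix l assume l: "l \<in> {..<m}"
      have "y l s \<le> hi + P" using upper[OF y t0, of hi l s] b l s by (auto simp: P_def)
      moreover have "lo - P \<le> y r s" using lower[OF y t0, of lo r s] b r s by (auto simp: P_def)
      ultimately show "w r l * (y l s - y r s) \<le> w r l * (hi - lo + 2 * P)"
        using wnn by (intro mult_left_mono) auto
    qed
    also have "\<dots> = (\<Sum>l<m. w r l) * (hi - lo + 2 * P)" by (simp add: sum_distrib_right)
    also have "\<dots> \<le> \<kappa>" unfolding \<kappa>_def using Dw[OF r] V0 P0 by (intro mult_right_mono) auto
    finally show "(\<Sum>l<m. w j l * (y l s - y j s)) + e \<le> \<kappa> + exp (- \<beta> * s)" using e j by simp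
  qed (use r t in auto)
  also have "\<dots> \<le> (lo + hi) / 2 + \<kappa> * (real N * h) + P"
  proof -
    have "\<kappa> * (t - t0) \<le> \<kappa> * (real N * h)" using k0 t by (intro mult_left_mono) auto
    moreover have "EE t0 t \<le> P" using EE_le[OF t(1)] by (simp add: P_def)
    ultimately show ?thesis using mid by linarith
  qed
  also have "\<kappa> * (real N * h) = (hi - lo + 2 * P) / 4"
  proof -
    have "\<kappa> * (real N * h) = (hi - lo + 2 * P) * (D * (real N * h))" by (simp add: \<kappa>_def algebra_simps)
    then show ?thesis using DNh by simp
  qed
  finally have "y r t \<le> (lo + hi) / 2 + (hi - lo + 2 * P) / 4 + P" .
  then have "y r t \<le> hi + P - (1/4) * (hi - lo) + (1/2) * P" by (simp add: field_simps)
  then show ?thesis by (simp add: P_def)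
qed

lemma child:
  assumes y: "odeP y" and t0: "t0 \<ge> 0" and b: "\<forall>j<m. y j t0 \<le> hi"
    and p: "p < m" and i: "i < m" and wip: "w i p > 0"
    and t1: "t0 \<le> t1"
    and hyp: "\<And>s. t1 \<le> s \<Longrightarrow> s \<le> t0 + N * h \<Longrightarrow> y p s \<le> hi + exp (- \<beta> * t0) / \<beta> - A"
    and t: "t1 + h \<le> t" "t \<le> t0 + N * h"
  shows "y i t \<le> hi + exp (- \<beta> * t0) / \<beta> - (w i p * h / 2) * A + exp (- \<beta> * t0) / \<beta>"
proof -
  define P where "P = exp (- \<beta> * t0) / \<beta>"
  have P0: "P \<ge> 0" using bpos by (simp add: P_def)
  have up: "\<And>l s. l < m \<Longrightarrow> t0 \<le> s \<Longrightarrow> y l s \<le> hi + P"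
    using upper[OF y t0, of hi] b by (auto simp: P_def)
  show ?thesis
  proof (cases "A \<le> 0")
    case True
    have "w i p * h \<ge> 0" using wip h_pos by simp
    then have "(w i p * h) * A \<le> 0" using True by (rule mult_nonneg_nonpos)
    then have "0 \<le> - (w i p * h / 2) * A" by simp
    then show ?thesis using up[OF i, of t] t t1 h_pos P0 by (simp add: P_def)
  next
    case False
    define c1 where "c1 = w i p * A / 2"
    have c1: "c1 > 0" using False wip by (simp add: c1_def)
    have t1t: "t1 \<le> t" using t h_pos by simp
    have t10: "0 \<le> t1" using t0 t1 by simp
    have "y i t \<le> (hi + P) + (- c1) * (t - t1) + EE t1 t"
    proof (rule ode_cmp[OF y t10 t1t, of "{i}" "\<lambda>_. hi + P" "\<lambda>_. - c1"])
      fix s j \<delta> e assume s: "s \<in> {t1..<t}" and j: "j \<in> {i}" and \<delta>: "\<delta> \<ge> 0"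
        and eq: "y j s = hi + P + - c1 * (s - t1) + EE t1 s + \<delta>" and e: "\<bar>e\<bar> \<le> exp (- \<beta> * s)"
      have ji: "j = i" using j by simp
      define Z where "Z = hi + P - y i s"
      have Zle: "Z \<le> c1 * (real N * h)"
      proof -
        have "Z = c1 * (s - t1) - EE t1 s - \<delta>" using eq ji by (simp add: Z_def)
        also have "\<dots> \<le> c1 * (s - t1)" using EE_nn[of t1 s] s \<delta> by simp
        also have "\<dots> \<le> c1 * (real N * h)" using c1 s t t1 by (intro mult_left_mono) auto
        finally show ?thesis .
      qed
      have Z0: "Z \<ge> 0" using up[OF i, of s] s t1 by (simp add: Z_def)
      have "(\<Sum>l<m. w i l * (y l s - y i s)) \<le> (\<Sum>l<m. w i l * Z - (if l = p then w i p * A else 0))"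
      proof (rule sum_mono)
        fix l assume l: "l \<in> {..<m}"
        show "w i l * (y l s - y i s) \<le> w i l * Z - (if l = p then w i p * A else 0)"
        proof (cases "l = p")
          case True
          have "y p s \<le> hi + P - A" using hyp[of s] s t by (simp add: P_def)
          then have "w i p * (y p s - y i s) \<le> w i p * (Z - A)"
            using wip by (intro mult_left_mono) (auto simp: Z_def)
          then show ?thesis using True by (simp add: algebra_simps)
        next
          case False
          have "y l s \<le> hi + P" using up l s t1 by auto
          then have "w i l * (y l s - y i s) \<le> w i l * Z"
            using wnn by (intro mult_left_mono) (auto simp: Z_def)
          then show ?thesis using False by simp
        qed
      qed
      also have "\<dots> = (\<Sum>l<m. w i l) * Z - w i p * A"
        using p by (simp add: sum_subtractf sum_distrib_right)
      also have "\<dots> \<le> D * Z - w i p * A" using Dw[OF i] Z0 by (simp add: mult_right_mono)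
      also have "\<dots> \<le> D * (c1 * (real N * h)) - w i p * A" using D1 Zle by (simp add: mult_left_mono)
      also have "\<dots> = c1 / 4 - 2 * c1" using DNh by (simp add: c1_def algebra_simps)
      finally show "(\<Sum>l<m. w j l * (y l s - y j s)) + e \<le> - c1 + exp (- \<beta> * s)"
        using e c1 ji by simp
    qed (use up[OF i t1] i t1t in auto)
    also have "\<dots> \<le> hi + P - c1 * h + P"
    proof -
      have "c1 * h \<le> c1 * (t - t1)" using c1 t by (intro mult_left_mono) auto
      moreover have "EE t1 t \<le> P"
      proof -
        have "exp (- \<beta> * t1) \<le> exp (- \<beta> * t0)" using bpos t1 by simp
        then have "exp (- \<beta> * t1) / \<beta> \<le> exp (- \<beta> * t0) / \<beta>"
          by (rule divide_right_mono) (use bpos in simp)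
        then show ?thesis using EE_le[OF t1t] by (simp add: P_def)
      qed
      ultimately show ?thesis by simp
    qed
    finally show ?thesis by (simp add: P_def c1_def algebra_simps)
  qed
qed

end



context grph2 begin

definition "Win y t0 lo hi \<longleftrightarrow> odeP y \<and> t0 \<ge> 0 \<and> (\<forall>j<m. lo \<le> y j t0 \<and> y j t0 \<le> hi) \<and> y r t0 \<le> (lo + hi) / 2"

lemma depth:
  "n \<le> N \<Longrightarrow> (edge m w ^^ n) r i \<Longrightarrow> \<exists>a>0. \<exists>b\<ge>0. \<forall>y t0 lo hi. Win y t0 lo hi \<longrightarrow>
     (\<forall>t. t0 + real n * h \<le> t \<and> t \<le> t0 + N * h \<longrightarrow>
        y i t \<le> hi + exp (- \<beta> * t0) / \<beta> - a * (hi - lo) + b * (exp (- \<beta> * t0) / \<beta>))"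
proof (induction n arbitrary: i)
  case 0
  then have "i = r" by simp
  have "\<forall>y t0 lo hi. Win y t0 lo hi \<longrightarrow>
     (\<forall>t. t0 + real 0 * h \<le> t \<and> t \<le> t0 + N * h \<longrightarrow>
        y i t \<le> hi + exp (- \<beta> * t0) / \<beta> - (1/4) * (hi - lo) + (1/2) * (exp (- \<beta> * t0) / \<beta>))"
    using root \<open>i = r\<close> by (auto simp: Win_def)
  then show ?case by (intro exI[of _ "1/4::real"] exI[of _ "1/2::real"] conjI) auto
next
  case (Suc n)
  obtain p where p: "(edge m w ^^ n) r p" "edge m w p i" using Suc.prems(2) by (rule relpowp_Suc_E)
  have pm: "p < m" "i < m" "w i p > 0" using p(2) by (auto simp: edge_def)
  obtain a b where ab: "a > 0" "b \<ge> 0" and IH: "\<forall>y t0 lo hi. Win y t0 lo hi \<longrightarrow>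
     (\<forall>t. t0 + real n * h \<le> t \<and> t \<le> t0 + N * h \<longrightarrow>
        y p t \<le> hi + exp (- \<beta> * t0) / \<beta> - a * (hi - lo) + b * (exp (- \<beta> * t0) / \<beta>))"
    using Suc.IH[OF _ p(1)] Suc.prems(1) by auto
  define c where "c = w i p * h / 2"
  have c: "c > 0" using pm h_pos by (simp add: c_def)
  have "\<forall>y t0 lo hi. Win y t0 lo hi \<longrightarrow>
     (\<forall>t. t0 + real (Suc n) * h \<le> t \<and> t \<le> t0 + N * h \<longrightarrow>
        y i t \<le> hi + exp (- \<beta> * t0) / \<beta> - (c * a) * (hi - lo) + (c * b + 1) * (exp (- \<beta> * t0) / \<beta>))"
  proof (intro allI impI)
    fix y t0 lo hi t assume W: "Win y t0 lo hi" and t: "t0 + real (Suc n) * h \<le> t \<and> t \<le> t0 + real N * h"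
    define P where "P = exp (- \<beta> * t0) / \<beta>"
    have W': "odeP y" "t0 \<ge> 0" "\<forall>j<m. y j t0 \<le> hi" using W by (auto simp: Win_def)
    have "y i t \<le> hi + P - c * (a * (hi - lo) - b * P) + P"
      unfolding P_def c_def
    proof (rule child[OF W'(1,2,3) pm, of "t0 + real n * h"])
      show "t0 \<le> t0 + real n * h" using h_pos by simp
      fix s assume s: "t0 + real n * h \<le> s" "s \<le> t0 + real N * h"
      have "y p s \<le> hi + exp (- \<beta> * t0) / \<beta> - a * (hi - lo) + b * (exp (- \<beta> * t0) / \<beta>)"
        using IH[rule_format, OF W, of s] s by blast
      then show "y p s \<le> hi + exp (- \<beta> * t0) / \<beta> - (a * (hi - lo) - b * (exp (- \<beta> * t0) / \<beta>))"
        by (simp add: algebra_simps)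
    qed (use t in \<open>auto simp: algebra_simps\<close>)
    then show "y i t \<le> hi + exp (- \<beta> * t0) / \<beta> - (c * a) * (hi - lo) + (c * b + 1) * (exp (- \<beta> * t0) / \<beta>)"
      unfolding P_def[symmetric] by (simp add: algebra_simps)
  qed
  moreover have "c * a > 0" "c * b + 1 \<ge> 0" using c ab by auto
  ultimately show ?case by blast
qed

end



context grph2 begin

lemma window: "\<exists>a b. 0 < a \<and> a \<le> 1/2 \<and> 0 \<le> b \<and> (\<forall>y t0 lo hi. odeP y \<and> t0 \<ge> 0 \<and>
   (\<forall>j<m. lo \<le> y j t0 \<and> y j t0 \<le> hi) \<longrightarrow>
   (\<exists>lo' hi'. (\<forall>j<m. lo' \<le> y j (t0 + N * h) \<and> y j (t0 + N * h) \<le> hi') \<and>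
      hi' - lo' \<le> (1 - a) * (hi - lo) + b * (exp (- \<beta> * t0) / \<beta>)))"
proof -
  define \<Phi> where "\<Phi> i a b \<longleftrightarrow> (\<forall>y t0 lo hi. Win y t0 lo hi \<longrightarrow>
      y i (t0 + N * h) \<le> hi + exp (- \<beta> * t0) / \<beta> - a * (hi - lo) + b * (exp (- \<beta> * t0) / \<beta>))" for i a b
  have ex: "\<exists>ab. i < m \<longrightarrow> fst ab > 0 \<and> snd ab \<ge> 0 \<and> \<Phi> i (fst ab) (snd ab)" for i
  proof (cases "i < m")
    case True
    obtain n where n: "n \<le> N" "(edge m w ^^ n) r i" using paths[OF True] by blast
    obtain a b where ab: "a > 0" "b \<ge> 0" and H: "\<forall>y t0 lo hi. Win y t0 lo hi \<longrightarrow>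
     (\<forall>t. t0 + real n * h \<le> t \<and> t \<le> t0 + N * h \<longrightarrow>
        y i t \<le> hi + exp (- \<beta> * t0) / \<beta> - a * (hi - lo) + b * (exp (- \<beta> * t0) / \<beta>))"
      using depth[OF n] by blast
    have "real n * h \<le> real N * h" using n h_pos by (intro mult_right_mono) auto
    then have "\<Phi> i a b" unfolding \<Phi>_def using H by auto
    then show ?thesis using ab by (intro exI[of _ "(a, b)"]) auto
  qed auto
  obtain f where f: "\<And>i. i < m \<Longrightarrow> fst (f i) > 0 \<and> snd (f i) \<ge> 0 \<and> \<Phi> i (fst (f i)) (snd (f i))"
  proof -
    have "\<forall>i. \<exists>ab. i < m \<longrightarrow> fst ab > 0 \<and> snd ab \<ge> 0 \<and> \<Phi> i (fst ab) (snd ab)" using ex by blast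
    then obtain f where "\<forall>i. i < m \<longrightarrow> fst (f i) > 0 \<and> snd (f i) \<ge> 0 \<and> \<Phi> i (fst (f i)) (snd (f i))"
      by (rule choice[THEN exE])
    then show ?thesis using that by blast
  qed
  define a0 where "a0 = min (1/2) (Min ((\<lambda>i. fst (f i)) ` {..<m}))"
  define b0 where "b0 = (\<Sum>i<m. snd (f i))"
  have ne: "(\<lambda>i. fst (f i)) ` {..<m} \<noteq> {}" using r by auto
  have a0: "0 < a0" "a0 \<le> 1/2" using f ne by (auto simp: a0_def Min_gr_iff)
  have a0le: "a0 \<le> fst (f j)" if "j < m" for j
    using that by (auto simp: a0_def min.coboundedI2)
  have b0: "0 \<le> b0" using f by (auto simp: b0_def intro: sum_nonneg)
  have b0le: "snd (f j) \<le> b0" if "j < m" for j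
    unfolding b0_def using that f by (intro member_le_sum) auto
  have main: "\<exists>lo' hi'. (\<forall>j<m. lo' \<le> y j (t0 + N * h) \<and> y j (t0 + N * h) \<le> hi') \<and>
      hi' - lo' \<le> (1 - a0) * (hi - lo) + (b0 + 2) * (exp (- \<beta> * t0) / \<beta>)"
    if y: "odeP y" and t0: "t0 \<ge> 0" and bd: "\<forall>j<m. lo \<le> y j t0 \<and> y j t0 \<le> hi" for y t0 lo hi
  proof -
    define P where "P = exp (- \<beta> * t0) / \<beta>"
    have P0: "P \<ge> 0" using bpos by (simp add: P_def)
    have V0: "hi - lo \<ge> 0" using bd r by force
    have tT: "t0 \<le> t0 + N * h" using h_pos by simp
    have up: "y j (t0 + N * h) \<le> hi + P" if "j < m" for j
      using upper[OF y t0 _ that tT, of hi] bd by (auto simp: P_def)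
    have lw: "lo - P \<le> y j (t0 + N * h)" if "j < m" for j
      using lower[OF y t0 _ that tT, of lo] bd by (auto simp: P_def)
    have mono: "- fst (f j) * (hi - lo) + snd (f j) * P \<le> - a0 * (hi - lo) + b0 * P" if "j < m" for j
    proof -
      have "a0 * (hi - lo) \<le> fst (f j) * (hi - lo)" using a0le[OF that] V0 by (rule mult_right_mono)
      moreover have "snd (f j) * P \<le> b0 * P" using b0le[OF that] P0 by (rule mult_right_mono)
      ultimately show ?thesis by simp
    qed
    show ?thesis
    proof (cases "y r t0 \<le> (lo + hi) / 2")
      case True
      have W: "Win y t0 lo hi" using y t0 bd True by (simp add: Win_def)
      have "y j (t0 + N * h) \<le> hi + P - a0 * (hi - lo) + b0 * P" if "j < m" for j
        using f[OF that] W mono[OF that] unfolding \<Phi>_def P_def by force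
      then have "\<forall>j<m. lo - P \<le> y j (t0 + N * h) \<and> y j (t0 + N * h) \<le> hi + P - a0 * (hi - lo) + b0 * P"
        using lw by auto
      moreover have "(hi + P - a0 * (hi - lo) + b0 * P) - (lo - P) = (1 - a0) * (hi - lo) + (b0 + 2) * P"
        by (simp add: algebra_simps)
      ultimately show ?thesis unfolding P_def by (intro exI conjI) (assumption, simp)
    next
      case False
      define z where "z = (\<lambda>i t. - y i t)"
      have W: "Win z t0 (- hi) (- lo)" using odeP_neg[OF y] t0 bd False
        by (auto simp: Win_def z_def)
      have "y j (t0 + N * h) \<ge> lo - P + a0 * (hi - lo) - b0 * P" if "j < m" for j
      proof -
        have "z j (t0 + N * h) \<le> - lo + P - fst (f j) * (- lo - - hi) + snd (f j) * P"
          using f[OF that] W unfolding \<Phi>_def P_def by blast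
        then show ?thesis using mono[OF that] by (simp add: z_def algebra_simps)
      qed
      then have "\<forall>j<m. lo - P + a0 * (hi - lo) - b0 * P \<le> y j (t0 + N * h) \<and> y j (t0 + N * h) \<le> hi + P"
        using up by auto
      moreover have "(hi + P) - (lo - P + a0 * (hi - lo) - b0 * P) = (1 - a0) * (hi - lo) + (b0 + 2) * P"
        by (simp add: algebra_simps)
      ultimately show ?thesis unfolding P_def by (intro exI conjI) (assumption, simp)
    qed
  qed
  show ?thesis using a0 b0 main
    by (intro exI[of _ a0] exI[of _ "b0 + 2"]) auto
qed

end



context grph2 begin

lemma consensus:
  assumes y: "odeP y"
  shows "\<exists>C \<epsilon>. C > 0 \<and> \<epsilon> > 0 \<and> (\<forall>i<m. \<forall>j<m. \<forall>t\<ge>0. \<bar>y i t - y j t\<bar> \<le> C * exp (- \<epsilon> * t))"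
proof -
  obtain a b where ab: "0 < a" "a \<le> 1/2" "0 \<le> b" and win: "\<And>y t0 lo hi. odeP y \<Longrightarrow> t0 \<ge> 0 \<Longrightarrow>
   (\<forall>j<m. lo \<le> y j t0 \<and> y j t0 \<le> hi) \<Longrightarrow>
   (\<exists>lo' hi'. (\<forall>j<m. lo' \<le> y j (t0 + N * h) \<and> y j (t0 + N * h) \<le> hi') \<and>
      hi' - lo' \<le> (1 - a) * (hi - lo) + b * (exp (- \<beta> * t0) / \<beta>))"
    using window by blast
  define T where "T = real N * h"
  have T0: "T > 0" using N1 h_pos by (simp add: T_def)
  define \<rho> where "\<rho> = 1 - a"
  have \<rho>: "0 \<le> \<rho>" "\<rho> < 1" using ab by (auto simp: \<rho>_def)
  define lam where "lam = max ((1 + \<rho>) / 2) (exp (- \<beta> * T))"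
  have eT: "exp (- \<beta> * T) < 1" using bpos T0 by simp
  have lam: "lam < 1" "\<rho> < lam" "0 < lam" "exp (- \<beta> * T) \<le> lam"
  proof -
    have "\<rho> < (1 + \<rho>) / 2" using \<rho> by simp
    then show "lam < 1" "\<rho> < lam" "0 < lam" "exp (- \<beta> * T) \<le> lam"
      using \<rho> eT unfolding lam_def by (auto simp: less_max_iff_disj)
  qed
  define hi0 where "hi0 = (\<Sum>j<m. \<bar>y j 0\<bar>)"
  have b0: "\<forall>j<m. - hi0 \<le> y j 0 \<and> y j 0 \<le> hi0"
  proof (intro allI impI)
    fix j assume "j < m"
    then have "\<bar>y j 0\<bar> \<le> hi0" unfolding hi0_def by (intro member_le_sum) auto
    then show "- hi0 \<le> y j 0 \<and> y j 0 \<le> hi0" by linarith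
  qed
  define Kc where "Kc = b / \<beta>"
  have Kc: "Kc \<ge> 0" using ab bpos by (simp add: Kc_def)
  define G where "G = max (hi0 - - hi0) (Kc / (lam - \<rho>))"
  have G0: "G \<ge> 0"
  proof -
    have "Kc / (lam - \<rho>) \<ge> 0" using Kc lam by simp
    then show ?thesis by (simp add: G_def le_max_iff_disj)
  qed
  have GK: "Kc \<le> (lam - \<rho>) * G"
  proof -
    have "Kc / (lam - \<rho>) \<le> G" by (simp add: G_def)
    then show ?thesis using lam by (simp add: divide_le_eq mult.commute)
  qed
  have claim: "\<exists>lo hi. (\<forall>j<m. lo \<le> y j (real n * T) \<and> y j (real n * T) \<le> hi) \<and> hi - lo \<le> G * lam ^ n" for n
  proof (induction n)
    case 0 show ?case using b0 by (intro exI[of _ "- hi0"] exI[of _ hi0]) (auto simp: G_def)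
  next
    case (Suc n)
    obtain lo hi where lh: "\<forall>j<m. lo \<le> y j (real n * T) \<and> y j (real n * T) \<le> hi" "hi - lo \<le> G * lam ^ n"
      using Suc.IH by blast
    have nT: "real n * T \<ge> 0" using T0 by simp
    obtain lo' hi' where lh': "\<forall>j<m. lo' \<le> y j (real n * T + N * h) \<and> y j (real n * T + N * h) \<le> hi'"
      "hi' - lo' \<le> (1 - a) * (hi - lo) + b * (exp (- \<beta> * (real n * T)) / \<beta>)"
      using win[OF y nT lh(1)] by blast
    have eq: "real n * T + N * h = real (Suc n) * T" by (simp add: T_def algebra_simps)
    have e1: "(1 - a) * (hi - lo) \<le> \<rho> * (G * lam ^ n)" unfolding \<rho>_def[symmetric]
      using lh(2) \<rho>(1) by (rule mult_left_mono)
    have "exp (- \<beta> * (real n * T)) = exp (- \<beta> * T) ^ n"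
      by (simp add: exp_of_nat_mult[symmetric] algebra_simps)
    also have "\<dots> \<le> lam ^ n" using lam by (intro power_mono) auto
    finally have "b * (exp (- \<beta> * (real n * T)) / \<beta>) \<le> Kc * lam ^ n"
      using ab bpos by (simp add: Kc_def divide_right_mono mult_left_mono)
    with e1 lh'(2) have "hi' - lo' \<le> (\<rho> * G + Kc) * lam ^ n" by (simp add: algebra_simps)
    also have "\<dots> \<le> (lam * G) * lam ^ n" using GK lam by (intro mult_right_mono) (auto simp: algebra_simps)
    also have "\<dots> = G * lam ^ Suc n" by simp
    finally show ?case using lh'(1) unfolding eq by blast
  qed
  define \<epsilon> where "\<epsilon> = - ln lam / T"
  have \<epsilon>: "\<epsilon> > 0"
  proof -
    have "ln lam < 0" using lam by simp
    then have "- ln lam / T > 0" using T0 by (intro divide_pos_pos) auto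
    then show ?thesis by (simp add: \<epsilon>_def)
  qed
  define C where "C = (G + 2 / \<beta>) / lam"
  have C: "C > 0"
  proof -
    have "G + 2 / \<beta> > 0" using G0 bpos by (simp add: add_nonneg_pos)
    then show ?thesis using lam unfolding C_def by (intro divide_pos_pos) auto
  qed
  have "\<bar>y i t - y j t\<bar> \<le> C * exp (- \<epsilon> * t)" if i: "i < m" and j: "j < m" and t: "t \<ge> 0" for i j t
  proof -
    define n where "n = nat \<lfloor>t / T\<rfloor>"
    have tT: "t / T \<ge> 0" using t T0 by simp
    have n1: "real n \<le> t / T" "t / T < real n + 1" using tT by (auto simp: n_def)
    have nT: "real n * T \<le> t" using n1(1) T0 by (simp add: le_divide_eq)
    have nT0: "real n * T \<ge> 0" using T0 by simp
    obtain lo hi where lh: "\<forall>j<m. lo \<le> y j (real n * T) \<and> y j (real n * T) \<le> hi" "hi - lo \<le> G * lam ^ n"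
      using claim by blast
    define P where "P = exp (- \<beta> * (real n * T)) / \<beta>"
    have up: "y l t \<le> hi + P" if "l < m" for l
      using upper[OF y nT0 _ that nT, of hi] lh(1) by (auto simp: P_def)
    have lw: "lo - P \<le> y l t" if "l < m" for l
      using lower[OF y nT0 _ that nT, of lo] lh(1) by (auto simp: P_def)
    have "P \<le> lam ^ n / \<beta>"
    proof -
      have "exp (- \<beta> * (real n * T)) = exp (- \<beta> * T) ^ n"
        by (simp add: exp_of_nat_mult[symmetric] algebra_simps)
      also have "\<dots> \<le> lam ^ n" using lam by (intro power_mono) auto
      finally show ?thesis unfolding P_def using bpos by (simp add: divide_right_mono)
    qed
    have "\<bar>y i t - y j t\<bar> \<le> (hi - lo) + 2 * P" using up[OF i] up[OF j] lw[OF i] lw[OF j] by linarith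
    also have "\<dots> \<le> G * lam ^ n + 2 * (lam ^ n / \<beta>)" using lh(2) \<open>P \<le> lam ^ n / \<beta>\<close> by linarith
    also have "\<dots> = (G + 2 / \<beta>) * lam ^ n" by (simp add: algebra_simps)
    also have "lam ^ n \<le> exp (- \<epsilon> * t) / lam"
    proof -
      have "lam ^ n = exp (real n * ln lam)" using lam by (simp add: exp_of_nat_mult)
      also have "\<dots> \<le> exp ((t / T - 1) * ln lam)"
      proof -
        have "ln lam < 0" using lam by simp
        moreover have "t / T - 1 \<le> real n" using n1 by simp
        ultimately show ?thesis by (simp add: mult_right_mono_neg)
      qed
      also have "(t / T - 1) * ln lam = - \<epsilon> * t - ln lam" using T0 by (simp add: \<epsilon>_def field_simps)
      also have "exp (- \<epsilon> * t - ln lam) = exp (- \<epsilon> * t) / lam" using lam by (simp add: exp_diff)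
      finally show ?thesis .
    qed
    then have "(G + 2 / \<beta>) * lam ^ n \<le> (G + 2 / \<beta>) * (exp (- \<epsilon> * t) / lam)"
      using G0 bpos by (intro mult_left_mono) auto
    also have "\<dots> = C * exp (- \<epsilon> * t)" by (simp add: C_def)
    finally show ?thesis .
  qed
  then show ?thesis using C \<epsilon> by blast
qed

end



theorem theorem4:
  fixes m :: nat and w :: "nat \<Rightarrow> nat \<Rightarrow> real" and \<beta> :: real
    and x :: "nat \<Rightarrow> real \<Rightarrow> real" and K :: "nat \<Rightarrow> enat" and tt :: "nat \<Rightarrow> nat \<Rightarrow> real"
  assumes "\<And>i j. w i j \<ge> 0" and "\<And>i. w i i = 0"
    and "has_spanning_tree m w"
    and "\<beta> > 0"
    and "system_S m w x K tt"
    and "self_triggered \<beta> m w x K tt"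
  shows "(\<exists>C \<epsilon>. C > 0 \<and> \<epsilon> > 0 \<and>
            (\<forall>i<m. \<forall>j<m. \<forall>t\<ge>0. \<bar>x i t - x j t\<bar> \<le> C * exp (- \<epsilon> * t)))
       \<and> (\<forall>i<m. \<forall>B::real. finite {k. enat k < K i \<and> tt i k \<le> B})"
proof -
  interpret sys m w \<beta> x K tt by unfold_locales (fact assms)+
  interpret grph m w \<beta> by unfold_locales (fact assms(1), fact assms(4))
  obtain r where r: "r < m" "\<And>i. i < m \<Longrightarrow> (edge m w)\<^sup>*\<^sup>* r i"
    using assms(3) unfolding has_spanning_tree_def by blast
  have "\<forall>i. \<exists>n. i < m \<longrightarrow> (edge m w ^^ n) r i"
  proof
    fix i show "\<exists>n. i < m \<longrightarrow> (edge m w ^^ n) r i"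
    proof (cases "i < m")
      case True
      then obtain n where "(edge m w ^^ n) r i" using rtranclp_imp_relpowp[OF r(2)[OF True]] by (elim exE)
      then show ?thesis by (intro exI[of _ n]) simp
    qed simp
  qed
  then have "\<exists>nn. \<forall>i. i < m \<longrightarrow> (edge m w ^^ nn i) r i" by (rule choice)
  then obtain nn where nn': "\<forall>i. i < m \<longrightarrow> (edge m w ^^ nn i) r i" by (elim exE)
  have nn: "\<And>i. i < m \<Longrightarrow> (edge m w ^^ nn i) r i" using nn' by simp
  define N where "N = 1 + (\<Sum>i<m. nn i)"
  define D where "D = 1 + (\<Sum>i<m. \<Sum>j<m. w i j)"
  have nnN: "nn i \<le> N" if "i < m" for i
  proof -
    have "nn i \<le> (\<Sum>i<m. nn i)" by (rule member_le_sum) (use that in auto)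
    then show ?thesis by (simp add: N_def)
  qed
  have Dw: "(\<Sum>j<m. w i j) \<le> D" if "i < m" for i
  proof -
    have "(\<Sum>j<m. w i j) \<le> (\<Sum>i<m. \<Sum>j<m. w i j)"
      by (rule member_le_sum[of i "{..<m}" "\<lambda>i. \<Sum>j<m. w i j"]) (use that assms(1) in \<open>auto intro: sum_nonneg\<close>)
    then show ?thesis by (simp add: D_def)
  qed
  have D1: "D \<ge> 1" unfolding D_def using assms(1) by (simp add: sum_nonneg)
  interpret grph2 m w \<beta> r N D
    using r(1) D1 Dw nnN nn by unfold_locales (auto simp: N_def)
  have "odeP x" unfolding odeP_def using ode cont by blast
  then show ?thesis using consensus zeno by blast
qed



end
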